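(* Consider any instance of set cover with $n$ elements and $m$ sets with nonnegative costs; let $B\in\mathbb{R}_+$ and $k\in\mathbb{Z}_+$ be values such that (i) for every element, the minimum cost of a set covering it is at least $36\ln m\cdot\frac{B}{k}$, and (ii) for every $k$-subset of elements, the minimum cost of a subfamily covering it is at most $B$. Then the minimum cost of a subfamily covering all elements is at most $O(\log n)\cdot B$.
   Context: Here $O(\log n)\cdot B$ means at most an absolute constant times $\log n\cdot B$, the constant being independent of the instance. *)

theory Defs
  imports Complex_Main
begin

definition covers :: "(nat \<Rightarrow> nat set) \<Rightarrow> nat set \<Rightarrow> nat set \<Rightarrow> bool" where
  "covers S F X \<longleftrightarrow> X \<subseteq> (\<Union>i\<in>F. S i)"

end

theory Submission imports Defs begin

lemma pow_fact_le_exp: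
  fixes x :: real assumes "x \<ge> 0" shows "x ^ n / fact n \<le> exp x"
proof -
  have "(\<Sum>j\<in>{n}. inverse (fact j) * x ^ j) \<le> (\<Sum>j. inverse (fact j) * x ^ j)"
    by (rule sum_le_suminf) (use assms summable_exp[of x] in auto)
  thus ?thesis by (simp add: exp_def divide_inverse ac_simps)
qed

lemma binom_ratio:
  "t \<le> r \<Longrightarrow> real (t choose l) * real r ^ l \<le> real (r choose l) * real t ^ l"
proof (induction l arbitrary: t r)
  case 0 then show ?case by simp
next
  case (Suc l)
  show ?case
  proof (cases t)
    case 0 then show ?thesis by simp
  next
    case (Suc t')
    then obtain r' where r: "r = Suc r'" using Suc.prems by (cases r) auto
    have t'r': "t' \<le> r'" using Suc.prems Suc r by simp
    have IH: "real (t' choose l) * real r' ^ l \<le> real (r' choose l) * real t' ^ l"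
      using Suc.IH t'r' by blast
    have key: "real (t' choose l) * real r ^ l \<le> real (r' choose l) * real t ^ l"
    proof (cases "r' = 0")
      case True then show ?thesis using t'r' r Suc by simp
    next
      case False
      have rat: "real t' / real r' \<le> real t / real r"
        using t'r' False r Suc by (simp add: field_simps)
      have "real (t' choose l) \<le> real (r' choose l) * (real t' / real r') ^ l"
        using IH False by (simp add: field_simps power_divide)
      also have "\<dots> \<le> real (r' choose l) * (real t / real r) ^ l"
        by (intro mult_left_mono power_mono rat) auto
      finally show ?thesis using r by (simp add: field_simps power_divide)
    qed
    have e1: "real (Suc l) * real (t choose Suc l) = real t * real (t' choose l)"
      using Suc_times_binomial[of l t'] Suc by (metis of_nat_mult)
    have e2: "real (Suc l) * real (r choose Suc l) = real r * real (r' choose l)"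
      using Suc_times_binomial[of l r'] r by (metis of_nat_mult)
    have "real (Suc l) * (real (t choose Suc l) * real r ^ Suc l)
        = (real (Suc l) * real (t choose Suc l)) * (real r * real r ^ l)" by (simp only: power_Suc ac_simps)
    also have "\<dots> = real t * real r * (real (t' choose l) * real r ^ l)" unfolding e1 by (simp only: ac_simps)
    also have "\<dots> \<le> real t * real r * (real (r' choose l) * real t ^ l)"
      by (intro mult_left_mono key) auto
    also have "\<dots> = (real r * real (r' choose l)) * (real t * real t ^ l)" by (simp only: ac_simps)
    also have "\<dots> = (real (Suc l) * real (r choose Suc l)) * (real t * real t ^ l)" unfolding e2 ..
    also have "\<dots> = real (Suc l) * (real (r choose Suc l) * real t ^ Suc l)"
      by (simp only: power_Suc ac_simps)
    finally show ?thesis by (simp only: mult_le_cancel_left_pos of_nat_0_less_iff zero_less_Suc)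
  qed
qed

lemma binom_fact_le: "real (k choose l) * fact l \<le> real k ^ l"
proof (cases "l \<le> k")
  case True
  have "fact l * fact (k - l) * (k choose l) = fact k" by (rule binomial_fact_lemma[OF True])
  hence eq: "fact k = (k choose l) * fact l * (fact (k - l) :: nat)" by (simp add: ac_simps)
  have "(k choose l) * fact l = fact k div (fact (k - l) :: nat)"
    unfolding eq by simp
  also have "\<dots> \<le> k ^ l" by (rule fact_div_fact_le_pow[OF True])
  finally have "(k choose l) * fact l \<le> k ^ l" .
  hence "real ((k choose l) * fact l) \<le> real (k ^ l)" by linarith
  thus ?thesis by simp
next
  case False
  hence "k < l" by simp
  then show ?thesis by (simp add: binomial_eq_0)
qed


lemma card_supersets:
  assumes "finite R" "A \<subseteq> R" "card A = l" "l \<le> k"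
  shows "card {X. A \<subseteq> X \<and> X \<subseteq> R \<and> card X = k} = (card R - l) choose (k - l)"
proof -
  have fA: "finite A" using assms finite_subset by blast
  have "bij_betw (\<lambda>X. X - A) {X. A \<subseteq> X \<and> X \<subseteq> R \<and> card X = k} {Y. Y \<subseteq> R - A \<and> card Y = k - l}"
  proof (rule bij_betw_byWitness[where f'="\<lambda>Y. Y \<union> A"])
    show "\<forall>X\<in>{X. A \<subseteq> X \<and> X \<subseteq> R \<and> card X = k}. (X - A) \<union> A = X" by auto
    show "\<forall>Y\<in>{Y. Y \<subseteq> R - A \<and> card Y = k - l}. (Y \<union> A) - A = Y" by auto
    show "(\<lambda>X. X - A) ` {X. A \<subseteq> X \<and> X \<subseteq> R \<and> card X = k} \<subseteq> {Y. Y \<subseteq> R - A \<and> card Y = k - l}"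
    proof
      fix Z assume "Z \<in> (\<lambda>X. X - A) ` {X. A \<subseteq> X \<and> X \<subseteq> R \<and> card X = k}"
      then obtain X where X: "A \<subseteq> X" "X \<subseteq> R" "card X = k" and Z: "Z = X - A" by blast
      have "finite X" using X assms finite_subset by blast
      then have "card (X - A) = card X - card A" using X by (simp add: card_Diff_subset fA)
      then show "Z \<in> {Y. Y \<subseteq> R - A \<and> card Y = k - l}" using X assms Z by auto
    qed
    show "(\<lambda>Y. Y \<union> A) ` {Y. Y \<subseteq> R - A \<and> card Y = k - l} \<subseteq> {X. A \<subseteq> X \<and> X \<subseteq> R \<and> card X = k}"
    proof
      fix Z assume "Z \<in> (\<lambda>Y. Y \<union> A) ` {Y. Y \<subseteq> R - A \<and> card Y = k - l}"
      then obtain Y where Y: "Y \<subseteq> R - A" "card Y = k - l" and Z: "Z = Y \<union> A" by blast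
      have fY: "finite Y" using Y assms finite_subset by blast
      have "card (Y \<union> A) = card Y + card A" using Y fY fA by (intro card_Un_disjoint) auto
      then show "Z \<in> {X. A \<subseteq> X \<and> X \<subseteq> R \<and> card X = k}" using Y assms Z by auto
    qed
  qed
  hence "card {X. A \<subseteq> X \<and> X \<subseteq> R \<and> card X = k} = card {Y. Y \<subseteq> R - A \<and> card Y = k - l}"
    by (rule bij_betw_same_card)
  also have "\<dots> = card (R - A) choose (k - l)" using assms by (intro n_subsets) auto
  also have "card (R - A) = card R - l" using assms fA by (simp add: card_Diff_subset)
  finally show ?thesis .
qed

lemma count_heavy:
  assumes "finite R" "T \<subseteq> R" "l \<le> k"
  shows "card {X. X \<subseteq> R \<and> card X = k \<and> l \<le> card (T \<inter> X)} \<le> (card T choose l) * ((card R - l) choose (k - l))"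
proof -
  let ?As = "{A. A \<subseteq> T \<and> card A = l}"
  have fT: "finite T" using assms finite_subset by blast
  have sub: "{X. X \<subseteq> R \<and> card X = k \<and> l \<le> card (T \<inter> X)} \<subseteq> (\<Union>A\<in>?As. {X. A \<subseteq> X \<and> X \<subseteq> R \<and> card X = k})"
  proof
    fix X assume "X \<in> {X. X \<subseteq> R \<and> card X = k \<and> l \<le> card (T \<inter> X)}"
    hence X: "X \<subseteq> R" "card X = k" "l \<le> card (T \<inter> X)" by auto
    obtain A where A: "A \<subseteq> T \<inter> X" "card A = l" by (rule obtain_subset_with_card_n[OF X(3)])
    have "A \<in> ?As" using A by simp
    moreover have "X \<in> {X. A \<subseteq> X \<and> X \<subseteq> R \<and> card X = k}" using A X by simp
    ultimately show "X \<in> (\<Union>A\<in>?As. {X. A \<subseteq> X \<and> X \<subseteq> R \<and> card X = k})" by (rule UN_I)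
  qed
  have fAs: "finite ?As" by (rule finite_subset[of _ "Pow T"]) (use fT in auto)
  have fin: "finite (\<Union>A\<in>?As. {X. A \<subseteq> X \<and> X \<subseteq> R \<and> card X = k})"
    by (rule finite_subset[of _ "Pow R"]) (use assms(1) in auto)
  have "card {X. X \<subseteq> R \<and> card X = k \<and> l \<le> card (T \<inter> X)} \<le> card (\<Union>A\<in>?As. {X. A \<subseteq> X \<and> X \<subseteq> R \<and> card X = k})"
    by (rule card_mono[OF fin sub])
  also have "\<dots> \<le> (\<Sum>A\<in>?As. card {X. A \<subseteq> X \<and> X \<subseteq> R \<and> card X = k})"
    by (rule card_UN_le[OF fAs])
  also have "\<dots> = (\<Sum>A\<in>?As. (card R - l) choose (k - l))"
  proof (rule sum.cong[OF refl])
    fix A assume "A \<in> ?As"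
    thus "card {X. A \<subseteq> X \<and> X \<subseteq> R \<and> card X = k} = (card R - l) choose (k - l)"
      using assms by (intro card_supersets) auto
  qed
  also have "\<dots> = (card T choose l) * ((card R - l) choose (k - l))"
    using n_subsets[OF fT, of l] by simp
  finally show ?thesis .
qed

lemma few_heavy:
  assumes R: "finite R" "T \<subseteq> R" "card R = r" "k \<le> r" and l: "1 \<le> l" "l \<le> k"
    and m: "m \<ge> 1" "ln (real m) \<le> real l"
    and small: "real (card T) * real k * exp 2 < real l * real r"
  shows "real (card {X. X \<subseteq> R \<and> card X = k \<and> l \<le> card (T \<inter> X)}) * real m < real (r choose k)"
proof -
  define t where "t = card T"
  have tr: "t \<le> r" using R card_mono t_def by blast
  have r0: "r > 0" using l R by simp
  define a where "a = real (t choose l)"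
  define b where "b = real (k choose l)"
  define c where "c = real (r choose l)"
  define F where "F = (fact l :: real)"
  define P where "P = real r ^ l"
  have c0: "c > 0" unfolding c_def using l R by simp
  have F0: "F > 0" unfolding F_def by simp
  have P0: "P > 0" unfolding P_def using r0 by simp
  have a0: "a \<ge> 0" "b \<ge> 0" unfolding a_def b_def by auto
  have h1: "a * P \<le> c * real t ^ l" unfolding a_def P_def c_def by (rule binom_ratio[OF tr])
  have h2: "b * F \<le> real k ^ l" unfolding b_def F_def by (rule binom_fact_le)
  have h3: "(real t * real k) ^ l < (real l * real r / exp 2) ^ l"
    using small l unfolding t_def
    by (intro power_strict_mono) (auto simp: field_simps)
  have h4: "real l ^ l \<le> exp (real l) * F"
    using pow_fact_le_exp[of "real l" l] unfolding F_def by (simp add: field_simps)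
  have "a * b * (F * P) = (a * P) * (b * F)" by (simp add: ac_simps)
  also have "\<dots> \<le> (c * real t ^ l) * real k ^ l"
    by (rule mult_mono[OF h1 h2]) (use c0 a0 F0 in auto)
  also have "\<dots> = c * (real t * real k) ^ l" by (simp add: power_mult_distrib)
  also have "\<dots> < c * (real l * real r / exp 2) ^ l" using h3 c0 by simp
  also have "\<dots> = c * real l ^ l * P / exp (2 * real l)"
    unfolding P_def by (simp add: power_mult_distrib power_divide exp_of_nat_mult[symmetric] mult.commute)
  also have "\<dots> \<le> c * (exp (real l) * F) * P / exp (2 * real l)"
    using h4 c0 P0 by (intro divide_right_mono mult_right_mono mult_left_mono) auto
  also have "\<dots> = (F * P) * (c * exp (- real l))"
    by (simp add: field_simps exp_minus) (simp add: exp_add[symmetric])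
  finally have ab: "a * b < c * exp (- real l)" using F0 P0 by (simp add: mult_less_cancel_left_pos mult.assoc)
  have me: "real m * exp (- real l) \<le> 1"
  proof -
    have "real m = exp (ln (real m))" using m by simp
    also have "\<dots> \<le> exp (real l)" using m(2) by (simp only: exp_le_cancel_iff)
    finally show ?thesis by (simp add: exp_minus field_simps)
  qed
  have "a * b * real m < c * exp (- real l) * real m" using ab m by (intro mult_strict_right_mono) auto
  also have "\<dots> = c * (real m * exp (- real l))" by (simp add: ac_simps)
  also have "\<dots> \<le> c * 1" using c0 me by (intro mult_left_mono) auto
  finally have key: "a * b * real m < c" by simp
  have cm: "(r choose k) * (k choose l) = (r choose l) * ((r - l) choose (k - l))"
    using choose_mult[of l k r] l R by simp
  have rk0: "real (r choose k) > 0" using R by simp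
  have N: "real (card {X. X \<subseteq> R \<and> card X = k \<and> l \<le> card (T \<inter> X)}) \<le> a * real ((r - l) choose (k - l))"
  proof -
    have "card {X. X \<subseteq> R \<and> card X = k \<and> l \<le> card (T \<inter> X)} \<le> (t choose l) * ((r - l) choose (k - l))"
      using count_heavy[OF R(1,2) l(2)] R(3) unfolding t_def by simp
    hence "real (card {X. X \<subseteq> R \<and> card X = k \<and> l \<le> card (T \<inter> X)}) \<le> real ((t choose l) * ((r - l) choose (k - l)))"
      by (simp only: of_nat_le_iff)
    thus ?thesis unfolding a_def by simp
  qed
  have "c * (a * real ((r - l) choose (k - l)) * real m) = a * b * real m * real (r choose k)"
    unfolding c_def b_def using arg_cong[OF cm, of real] by (simp add: ac_simps)
  also have "\<dots> < c * real (r choose k)" using key rk0 by simp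
  finally have "a * real ((r - l) choose (k - l)) * real m < real (r choose k)" using c0 by simp
  moreover have "real (card {X. X \<subseteq> R \<and> card X = k \<and> l \<le> card (T \<inter> X)}) * real m \<le> a * real ((r - l) choose (k - l)) * real m"
    using N by (intro mult_right_mono) auto
  ultimately show ?thesis by linarith
qed

lemma exists_efficient:
  fixes S :: "nat \<Rightarrow> nat set" and c :: "nat \<Rightarrow> real"
  assumes fin: "finite I" "finite R" and kR: "k \<le> card R" and k0: "k > 0" and B0: "B > 0"
    and cnn: "\<forall>i\<in>I. c i \<ge> 0"
    and cheap: "\<forall>e\<in>R. \<forall>i\<in>I. e \<in> S i \<longrightarrow> c i \<ge> 36 * ln (real (card I)) * B / real k"
    and cov: "\<forall>X\<subseteq>R. card X = k \<longrightarrow> (\<exists>F\<subseteq>I. covers S F X \<and> sum c F \<le> B)"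
  shows "\<exists>i\<in>I. S i \<inter> R \<noteq> {} \<and> c i * real (card R) \<le> exp 2 * B * real (card (S i \<inter> R))"
proof (rule ccontr)
  assume "\<not> ?thesis"
  hence bad: "\<And>i. i \<in> I \<Longrightarrow> S i \<inter> R \<noteq> {} \<Longrightarrow> exp 2 * B * real (card (S i \<inter> R)) < c i * real (card R)"
    by force
  define r where "r = card R"
  define m where "m = card I"
  define N where "N i = {X. X \<subseteq> R \<and> card X = k \<and> S i \<inter> X \<noteq> {} \<and> real k * c i \<le> B * real (card (S i \<inter> X))}" for i
  let ?X = "{X. X \<subseteq> R \<and> card X = k}"
  have cardX: "card ?X = r choose k" unfolding r_def by (rule n_subsets[OF fin(2)])
  have rk0: "(r choose k) > 0" using kR unfolding r_def by simp
  have XN: "?X \<subseteq> (\<Union>i\<in>I. N i)"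
  proof
    fix X assume "X \<in> ?X"
    hence X: "X \<subseteq> R" "card X = k" by auto
    obtain F where F: "F \<subseteq> I" "covers S F X" "sum c F \<le> B" using cov X by blast
    have fF: "finite F" using F fin finite_subset by blast
    define G where "G = {i\<in>F. S i \<inter> X \<noteq> {}}"
    have fG: "finite G" using fF G_def by simp
    have fXf: "finite X" using X fin finite_subset by blast
    have XG: "X \<subseteq> (\<Union>i\<in>G. S i \<inter> X)" using F(2) unfolding covers_def G_def by blast
    have "real k \<le> real (card (\<Union>i\<in>G. S i \<inter> X))"
      using card_mono[OF _ XG] fG fXf X by simp
    also have "\<dots> \<le> real (\<Sum>i\<in>G. card (S i \<inter> X))" using card_UN_le[OF fG, of "\<lambda>i. S i \<inter> X"] of_nat_le_iff by blast
    finally have k_le: "real k \<le> (\<Sum>i\<in>G. real (card (S i \<inter> X)))" by simp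
    have Gne: "G \<noteq> {}"
    proof
      assume "G = {}"
      hence "X = {}" using XG by auto
      thus False using X k0 by simp
    qed
    have sG: "sum c G \<le> B"
      using F(3) sum_mono2[OF fF, of G c] cnn F(1) unfolding G_def by force
    have "\<exists>i\<in>G. real k * c i \<le> B * real (card (S i \<inter> X))"
    proof (rule ccontr)
      assume "\<not> ?thesis"
      hence "\<And>i. i \<in> G \<Longrightarrow> real (card (S i \<inter> X)) < real k * c i / B" using B0
        by (auto simp: field_simps not_le)
      hence "(\<Sum>i\<in>G. real (card (S i \<inter> X))) < (\<Sum>i\<in>G. real k * c i / B)"
        by (intro sum_strict_mono fG Gne) auto
      also have "\<dots> = real k * sum c G / B" by (simp add: sum_divide_distrib sum_distrib_left)
      also have "\<dots> \<le> real k"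
      proof -
        have "real k * sum c G \<le> real k * B" by (rule mult_left_mono[OF sG]) simp
        thus ?thesis using B0 by (simp add: divide_le_eq mult.commute)
      qed
      finally show False using k_le by simp
    qed
    then obtain i where "i \<in> G" "real k * c i \<le> B * real (card (S i \<inter> X))" by blast
    thus "X \<in> (\<Union>i\<in>I. N i)" using X F(1) unfolding G_def N_def by blast
  qed
  have finN: "\<And>i. finite (N i)" unfolding N_def
    by (rule finite_subset[of _ "Pow R"]) (use fin(2) in auto)
  have Xne: "?X \<noteq> {}" using cardX rk0 by (metis card.empty less_irrefl)
  have Ine: "I \<noteq> {}" using XN Xne by auto
  have m1: "m \<ge> 1" unfolding m_def using Ine fin(1) by (simp add: Suc_leI card_gt_0_iff)
  have each: "real (card (N i)) * real m < real (r choose k)" if iI: "i \<in> I" for i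
  proof (cases "S i \<inter> R = {}")
    case True
    hence "N i = {}" unfolding N_def by blast
    thus ?thesis using rk0 by simp
  next
    case False
    define T where "T = S i \<inter> R"
    define lam where "lam = real k * c i / B"
    define l where "l = max 1 (nat \<lceil>lam\<rceil>)"
    obtain e where "e \<in> T" using False T_def by blast
    hence ci: "c i \<ge> 36 * ln (real m) * B / real k" using cheap iI unfolding T_def m_def by blast
    have lnm: "ln (real m) \<ge> 0" using m1 by simp
    have lam_ge: "lam \<ge> 36 * ln (real m)" using ci k0 B0 unfolding lam_def by (simp add: field_simps)
    have l_ge: "real l \<ge> lam" unfolding l_def by linarith
    have l1: "1 \<le> l" unfolding l_def by simp
    have badi: "exp 2 * B * real (card T) < c i * real r" using bad[OF iI False] unfolding T_def r_def .
    have NT: "N i \<subseteq> {X. X \<subseteq> R \<and> card X = k \<and> l \<le> card (T \<inter> X)}"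
    proof
      fix X assume "X \<in> N i"
      hence X: "X \<subseteq> R" "card X = k" "S i \<inter> X \<noteq> {}" "real k * c i \<le> B * real (card (S i \<inter> X))"
        unfolding N_def by auto
      have TX: "T \<inter> X = S i \<inter> X" using X(1) T_def by blast
      have fX: "finite X" using X fin finite_subset by blast
      have "card (S i \<inter> X) \<ge> 1" using X(3) fX by (simp add: Suc_leI card_gt_0_iff)
      moreover have "real (card (S i \<inter> X)) \<ge> lam" using X(4) B0 unfolding lam_def by (simp add: field_simps)
      hence "card (S i \<inter> X) \<ge> nat \<lceil>lam\<rceil>" by linarith
      ultimately show "X \<in> {X. X \<subseteq> R \<and> card X = k \<and> l \<le> card (T \<inter> X)}"
        using X TX unfolding l_def by auto
    qed
    show ?thesis
    proof (cases "l \<le> k")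
      case False
      have "{X. X \<subseteq> R \<and> card X = k \<and> l \<le> card (T \<inter> X)} = {}"
      proof (safe)
        fix X assume X: "X \<subseteq> R" "l \<le> card (T \<inter> X)" "k = card X"
        have fX: "finite X" using X fin finite_subset by blast
        have "card (T \<inter> X) \<le> card X" using fX by (simp add: card_mono)
        thus "X \<in> {}" using X False by simp
      qed
      hence "N i = {}" using NT by blast
      thus ?thesis using rk0 by simp
    next
      case True
      have small: "real (card T) * real k * exp 2 < real l * real r"
      proof -
        have "real (card T) * real k * exp 2 = (exp 2 * B * real (card T)) * (real k / B)" using B0 by simp
        also have "\<dots> < (c i * real r) * (real k / B)" using badi k0 B0 by (intro mult_strict_right_mono) auto
        also have "\<dots> = lam * real r" unfolding lam_def by simp
        also have "\<dots> \<le> real l * real r" using l_ge by (intro mult_right_mono) auto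
        finally show ?thesis .
      qed
      have "real (card {X. X \<subseteq> R \<and> card X = k \<and> l \<le> card (T \<inter> X)}) * real m < real (r choose k)"
        by (rule few_heavy[OF fin(2) _ r_def[symmetric] _ l1 True m1 _ small])
           (use T_def kR r_def lam_ge l_ge lnm in auto)
      moreover have "card (N i) \<le> card {X. X \<subseteq> R \<and> card X = k \<and> l \<le> card (T \<inter> X)}"
        by (rule card_mono[OF _ NT]) (rule finite_subset[of _ "Pow R"], use fin(2) in auto)
      moreover have "real (card (N i)) * real m \<le> real (card {X. X \<subseteq> R \<and> card X = k \<and> l \<le> card (T \<inter> X)}) * real m"
        using calculation(2) by (intro mult_right_mono) auto
      ultimately show ?thesis by linarith
    qed
  qed
  have "real (r choose k) \<le> real (card (\<Union>i\<in>I. N i))"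
    using card_mono[OF _ XN] cardX fin finN by simp
  also have "\<dots> \<le> (\<Sum>i\<in>I. real (card (N i)))" 
  proof -
    have "card (\<Union>i\<in>I. N i) \<le> (\<Sum>i\<in>I. card (N i))" by (rule card_UN_le[OF fin(1)])
    hence "real (card (\<Union>i\<in>I. N i)) \<le> real (\<Sum>i\<in>I. card (N i))" by (simp only: of_nat_le_iff)
    thus ?thesis by simp
  qed
  also have "\<dots> < (\<Sum>i\<in>I. real (r choose k) / real m)"
    using each m1 fin(1) unfolding m_def[symmetric]
    by (intro sum_strict_mono) (auto simp: field_simps m_def)
  also have "\<dots> = real (r choose k)" using m1 unfolding m_def by simp
  finally show False by simp
qed

definition Pot :: "nat \<Rightarrow> real" where "Pot r = (if r = 0 then 0 else 1 + ln (real r))"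

lemma Pot_nonneg: "Pot r \<ge> 0" unfolding Pot_def by auto

lemma Pot_step:
  assumes "1 \<le> d" "d \<le> r" shows "real d / real r + Pot (r - d) \<le> Pot r"
proof (cases "d = r")
  case True then show ?thesis using assms unfolding Pot_def by simp
next
  case False
  hence rd: "r - d > 0" using assms by simp
  have r0: "r > 0" using assms by simp
  have "ln (real (r - d) / real r) \<le> real (r - d) / real r - 1" using rd r0 by (intro ln_le_minus_one) auto
  also have "\<dots> = - (real d / real r)" using assms r0 by (simp add: of_nat_diff field_simps)
  finally have "ln (real (r - d)) - ln (real r) \<le> - (real d / real r)" using rd r0 by (simp add: ln_div)
  thus ?thesis using rd r0 unfolding Pot_def by simp
qed

lemma sum_union_le:
  fixes c :: "nat \<Rightarrow> real"
  assumes "finite A" "finite B" "\<forall>i\<in>A \<union> B. c i \<ge> 0"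
  shows "sum c (A \<union> B) \<le> sum c A + sum c B"
proof -
  have "sum c (A \<union> B) + sum c (A \<inter> B) = sum c A + sum c B" by (rule sum.union_inter[OF assms(1,2)])
  moreover have "sum c (A \<inter> B) \<ge> 0" using assms by (intro sum_nonneg) auto
  ultimately show ?thesis by linarith
qed

lemma greedy:
  fixes S :: "nat \<Rightarrow> nat set" and c :: "nat \<Rightarrow> real"
  assumes fI: "finite I" and B0: "B > 0" and k0: "k > 0" and cnn: "\<forall>i\<in>I. c i \<ge> 0"
    and cheap: "\<forall>e\<in>U. \<forall>i\<in>I. e \<in> S i \<longrightarrow> c i \<ge> 36 * ln (real (card I)) * B / real k"
    and cov: "\<forall>X\<subseteq>U. card X \<le> k \<longrightarrow> (\<exists>F\<subseteq>I. covers S F X \<and> sum c F \<le> B)"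
  shows "finite R \<Longrightarrow> R \<subseteq> U \<Longrightarrow> \<exists>F\<subseteq>I. covers S F R \<and> sum c F \<le> exp 2 * B * Pot (card R) + B"
proof (induction "card R" arbitrary: R rule: less_induct)
  case less
  show ?case
  proof (cases "card R \<le> k")
    case True
    have ex: "\<exists>F\<subseteq>I. covers S F R \<and> sum c F \<le> B" using cov less.prems(2) True by blast
    then obtain F where F: "F \<subseteq> I" "covers S F R" "sum c F \<le> B" by blast
    have "exp 2 * B * Pot (card R) \<ge> 0" using B0 Pot_nonneg by simp
    hence "sum c F \<le> exp 2 * B * Pot (card R) + B" using F(3) by linarith
    thus ?thesis using F(1,2) by blast
  next
    case False
    have ex: "\<exists>i\<in>I. S i \<inter> R \<noteq> {} \<and> c i * real (card R) \<le> exp 2 * B * real (card (S i \<inter> R))"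
    proof -
      have c1: "\<forall>e\<in>R. \<forall>i\<in>I. e \<in> S i \<longrightarrow> c i \<ge> 36 * ln (real (card I)) * B / real k"
        using cheap less.prems(2) by blast
      have c2: "\<forall>X\<subseteq>R. card X = k \<longrightarrow> (\<exists>F\<subseteq>I. covers S F X \<and> sum c F \<le> B)"
      proof (intro allI impI)
        fix X assume "X \<subseteq> R" "card X = k"
        hence "X \<subseteq> U" "card X \<le> k" using less.prems(2) by auto
        thus "\<exists>F\<subseteq>I. covers S F X \<and> sum c F \<le> B" using cov by blast
      qed
      have kR: "k \<le> card R" using False by simp
      show ?thesis by (rule exists_efficient[OF fI less.prems(1) kR k0 B0 cnn c1 c2])
    qed
    then obtain i where i: "i \<in> I" "S i \<inter> R \<noteq> {}" "c i * real (card R) \<le> exp 2 * B * real (card (S i \<inter> R))"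
      by blast
    define R' where "R' = R - S i"
    define d where "d = card (S i \<inter> R)"
    have d1: "1 \<le> d" unfolding d_def using i(2) less.prems(1) by (simp add: Suc_leI card_gt_0_iff)
    have dr: "d \<le> card R" unfolding d_def using less.prems(1) by (simp add: card_mono)
    have cR': "card R' = card R - d" unfolding R'_def d_def
      using card_Diff_subset_Int[of R "S i"] less.prems(1) by (simp add: Int_commute)
    have "card R' < card R" using cR' d1 dr by simp
    then obtain F' where F': "F' \<subseteq> I" "covers S F' R'" "sum c F' \<le> exp 2 * B * Pot (card R') + B"
      using less.hyps[of R'] less.prems unfolding R'_def by blast
    have fF': "finite F'" using F' fI finite_subset by blast
    have cov2: "covers S (insert i F') R" using F'(2) unfolding covers_def R'_def by blast
    have sum_ins: "sum c (insert i F') \<le> c i + sum c F'"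
      using fF' cnn i(1) by (cases "i \<in> F'") (auto simp: insert_absorb)
    have r0: "card R > 0" using dr d1 by simp
    have ci: "c i \<le> exp 2 * B * (real d / real (card R))"
      using i(3) r0 unfolding d_def by (simp add: field_simps)
    have "sum c (insert i F') \<le> exp 2 * B * (real d / real (card R)) + exp 2 * B * Pot (card R - d) + B"
      using sum_ins ci F'(3) cR' by simp
    also have "\<dots> = exp 2 * B * (real d / real (card R) + Pot (card R - d)) + B" by (simp add: algebra_simps)
    also have "\<dots> \<le> exp 2 * B * Pot (card R) + B"
      using Pot_step[OF d1 dr] B0 by (intro add_right_mono mult_left_mono) auto
    finally show ?thesis using cov2 F'(1) i(1) by blast
  qed
qed

lemma zero_case:
  fixes S :: "nat \<Rightarrow> nat set" and c :: "nat \<Rightarrow> real"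
  assumes fI: "finite I" and k0: "k > 0" and cnn: "\<forall>i\<in>I. c i \<ge> 0"
    and cov: "\<forall>X\<subseteq>U. card X \<le> k \<longrightarrow> (\<exists>F\<subseteq>I. covers S F X \<and> sum c F \<le> 0)"
  shows "finite R \<Longrightarrow> R \<subseteq> U \<Longrightarrow> \<exists>F\<subseteq>I. covers S F R \<and> sum c F \<le> 0"
proof (induction R rule: finite_induct)
  case empty
  show ?case by (rule exI[of _ "{}"]) (simp add: covers_def)
next
  case (insert e R)
  obtain F where F: "F \<subseteq> I" "covers S F R" "sum c F \<le> 0" using insert by blast
  have e1: "{e} \<subseteq> U" "card {e} \<le> k" using insert.prems k0 by auto
  obtain G where G: "G \<subseteq> I" "covers S G {e}" "sum c G \<le> 0" using cov e1 by blast
  have "sum c (F \<union> G) \<le> sum c F + sum c G"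
    using F G cnn by (intro sum_union_le finite_subset[OF F(1) fI] finite_subset[OF G(1) fI]) auto
  moreover have "covers S (F \<union> G) (insert e R)" using F G unfolding covers_def by blast
  moreover have "F \<union> G \<subseteq> I" using F G by blast
  moreover have "sum c (F \<union> G) \<le> 0" using calculation(1) F(3) G(3) by linarith
  ultimately show ?case by blast
qed

theorem mainTheorem7:
  "\<exists>C::real. \<forall>(U::nat set) (I::nat set) (S::nat \<Rightarrow> nat set) (c::nat \<Rightarrow> real) (B::real) (k::nat).
     finite U \<and> finite I \<and> card U \<ge> 2 \<and> (\<forall>i\<in>I. S i \<subseteq> U) \<and> (\<forall>i\<in>I. c i \<ge> 0) \<and>
     B \<ge> 0 \<and> k > 0 \<and>
     (\<forall>e\<in>U. \<forall>i\<in>I. e \<in> S i \<longrightarrow> c i \<ge> 36 * ln (real (card I)) * B / real k) \<and>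
     (\<forall>X\<subseteq>U. card X \<le> k \<longrightarrow> (\<exists>F\<subseteq>I. covers S F X \<and> sum c F \<le> B))
     \<longrightarrow> (\<exists>F\<subseteq>I. covers S F U \<and> sum c F \<le> C * ln (real (card U)) * B)"
proof (rule exI[of _ "3 * exp 2 + 2"], intro allI impI, elim conjE)
  fix U I :: "nat set" and S :: "nat \<Rightarrow> nat set" and c :: "nat \<Rightarrow> real" and B :: real and k :: nat
  assume fU: "finite U" and fI: "finite I" and U2: "card U \<ge> 2" and cnn: "\<forall>i\<in>I. c i \<ge> 0"
    and B0: "B \<ge> 0" and k0: "k > 0"
    and cheap: "\<forall>e\<in>U. \<forall>i\<in>I. e \<in> S i \<longrightarrow> c i \<ge> 36 * ln (real (card I)) * B / real k"
    and cov: "\<forall>X\<subseteq>U. card X \<le> k \<longrightarrow> (\<exists>F\<subseteq>I. covers S F X \<and> sum c F \<le> B)"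
    and "\<forall>i\<in>I. S i \<subseteq> U"
  define n where "n = card U"
  have ln2: "ln (2::real) \<ge> 1/2"
    using ln_le_minus_one[of "1/2::real"] by (simp add: ln_div)
  have lnn: "ln (real n) \<ge> 1/2"
  proof -
    have "ln (2::real) \<le> ln (real n)" using U2 unfolding n_def by simp
    thus ?thesis using ln2 by linarith
  qed
  show "\<exists>F\<subseteq>I. covers S F U \<and> sum c F \<le> (3 * exp 2 + 2) * ln (real (card U)) * B"
  proof (cases "B = 0")
    case True
    have cov0: "\<forall>X\<subseteq>U. card X \<le> k \<longrightarrow> (\<exists>F\<subseteq>I. covers S F X \<and> sum c F \<le> 0)"
      using cov True by simp
    have "\<exists>F\<subseteq>I. covers S F U \<and> sum c F \<le> 0"
      by (rule zero_case[OF fI k0 cnn cov0 fU subset_refl])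
    thus ?thesis using True by simp
  next
    case False
    hence Bp: "B > 0" using B0 by simp
    obtain F where F: "F \<subseteq> I" "covers S F U" "sum c F \<le> exp 2 * B * Pot (card U) + B"
      using greedy[OF fI Bp k0 cnn cheap cov fU] by blast
    have "exp 2 * B * Pot n + B = exp 2 * B * (1 + ln (real n)) + B"
      using U2 unfolding Pot_def n_def by simp
    also have "\<dots> \<le> exp 2 * B * (3 * ln (real n)) + 2 * ln (real n) * B"
    proof -
      have "exp 2 * B * (1 + ln (real n)) \<le> exp 2 * B * (3 * ln (real n))"
        using lnn Bp by (intro mult_left_mono) auto
      moreover have "B \<le> 2 * ln (real n) * B"
      proof -
        have "1 * B \<le> (2 * ln (real n)) * B" using lnn Bp by (intro mult_right_mono) auto
        thus ?thesis by simp
      qed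
      ultimately show ?thesis by linarith
    qed
    also have "\<dots> = (3 * exp 2 + 2) * ln (real n) * B" by (simp add: algebra_simps)
    finally show ?thesis using F unfolding n_def by auto
  qed
qed
end
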